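(* Let $k$ be a positive integer and let $G$ be a finite graph whose vertex set is partitioned into cliques $V_1,\ldots,V_r$. Suppose that for every $i \in \{1,\ldots,r\}$ and every $v \in V_i$, the number of neighbours of $v$ outside $V_i$ is at most $\min\{k, |V_i|-k\}$. Then $G$ contains a stable set of size $r$.
   Context: A stable set is a set of pairwise non-adjacent vertices. *)

theory Defs
  imports Main
begin

definition simple_graph :: "'a set \<Rightarrow> ('a \<Rightarrow> 'a \<Rightarrow> bool) \<Rightarrow> bool" where
  "simple_graph V E \<longleftrightarrow> finite V \<and> (\<forall>u v. E u v \<longrightarrow> E v u)
     \<and> (\<forall>v. \<not> E v v) \<and> (\<forall>u v. E u v \<longrightarrow> u \<in> V \<and> v \<in> V)"

definition is_clique :: "('a \<Rightarrow> 'a \<Rightarrow> bool) \<Rightarrow> 'a set \<Rightarrow> bool" where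
  "is_clique E C \<longleftrightarrow> (\<forall>u\<in>C. \<forall>v\<in>C. u \<noteq> v \<longrightarrow> E u v)"

definition stable_set :: "('a \<Rightarrow> 'a \<Rightarrow> bool) \<Rightarrow> 'a set \<Rightarrow> bool" where
  "stable_set E S \<longleftrightarrow> (\<forall>u\<in>S. \<forall>v\<in>S. \<not> E u v)"

definition nbrs_outside :: "'a set \<Rightarrow> ('a \<Rightarrow> 'a \<Rightarrow> bool) \<Rightarrow> 'a \<Rightarrow> 'a set \<Rightarrow> 'a set" where
  "nbrs_outside V E v A = {u \<in> V - A. E v u}"

end

theory Submission imports Defs begin

lemma lex_of_first_lt:
  "length xs = length ys \<Longrightarrow> p < length xs \<Longrightarrow> (\<forall>i<p. xs!i \<le> ys!i) \<Longrightarrow> xs!p < (ys!p::nat)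
   \<Longrightarrow> (xs, ys) \<in> lex less_than"
proof (induction xs arbitrary: ys p)
  case Nil then show ?case by simp
next
  case (Cons x xs)
  then obtain y ys' where ys: "ys = y # ys'" by (cases ys) auto
  show ?case
  proof (cases p)
    case 0 then show ?thesis using Cons.prems ys by simp
  next
    case (Suc p')
    have xy: "x \<le> y" using Cons.prems ys Suc by force
    show ?thesis
    proof (cases "x = y")
      case True
      have "(xs, ys') \<in> lex less_than"
        apply (rule Cons.IH[of ys' p'])
        using Cons.prems ys Suc by (auto simp: less_Suc_eq_0_disj)
      then show ?thesis using ys True by simp
    next
      case False then show ?thesis using xy ys Cons.prems by simp
    qed
  qed
qed

locale thm4 =
  fixes V :: "'a set" and E :: "'a \<Rightarrow> 'a \<Rightarrow> bool"
    and P :: "nat \<Rightarrow> 'a set" and k r :: nat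
  assumes graph: "simple_graph V E"
    and kpos: "k > 0"
    and parts_nonempty: "\<forall>i<r. P i \<noteq> {}"
    and parts_disjoint: "\<forall>i<r. \<forall>j<r. i \<noteq> j \<longrightarrow> P i \<inter> P j = {}"
    and parts_cover: "(\<Union>i<r. P i) = V"
    and parts_cliques: "\<forall>i<r. is_clique E (P i)"
    and degree: "\<forall>i<r. \<forall>v\<in>P i.
        int (card (nbrs_outside V E v (P i))) \<le> min (int k) (int (card (P i)) - int k)"
begin

definition Hout where "Hout u v \<longleftrightarrow> E u v \<and> \<not>(\<exists>j<r. u \<in> P j \<and> v \<in> P j)"
definition NO where "NO v = {u. Hout v u}"
definition goodM :: "nat set \<Rightarrow> (nat \<Rightarrow> 'a) \<Rightarrow> bool" where
  "goodM I m \<longleftrightarrow> (\<forall>i\<in>I. m i \<in> P i) \<and> (\<forall>i\<in>I. \<forall>j\<in>I. \<not> E (m i) (m j))"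

lemma finV: "finite V" using graph by (simp add: simple_graph_def)
lemma Esym: "E u v \<Longrightarrow> E v u" using graph by (simp add: simple_graph_def)
lemma Eirr: "\<not> E v v" using graph by (simp add: simple_graph_def)
lemma EV: "E u v \<Longrightarrow> v \<in> V" using graph by (simp add: simple_graph_def)
lemma PV: "i < r \<Longrightarrow> P i \<subseteq> V" using parts_cover by auto
lemma finP: "i < r \<Longrightarrow> finite (P i)" using PV finV finite_subset by blast
lemma disj: "i < r \<Longrightarrow> j < r \<Longrightarrow> v \<in> P i \<Longrightarrow> v \<in> P j \<Longrightarrow> i = j"
  using parts_disjoint by blast

lemma Hout_sym: "Hout u v = Hout v u"
  unfolding Hout_def using Esym by blast

lemma Hout_diff: "u \<in> P i \<Longrightarrow> v \<in> P j \<Longrightarrow> i < r \<Longrightarrow> j < r \<Longrightarrow> i \<noteq> j \<Longrightarrow> E u v \<Longrightarrow> Hout u v"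
  unfolding Hout_def using disj by blast

lemma NO_eq: "v \<in> P i \<Longrightarrow> i < r \<Longrightarrow> NO v = nbrs_outside V E v (P i)"
  unfolding NO_def nbrs_outside_def Hout_def using EV disj by blast

lemma finNO: "finite (NO v)"
proof -
  have "NO v \<subseteq> V" unfolding NO_def Hout_def using EV by blast
  then show ?thesis using finV finite_subset by blast
qed

lemma deg: "v \<in> P i \<Longrightarrow> i < r \<Longrightarrow> card (NO v) \<le> k \<and> card (NO v) + k \<le> card (P i)"
  using degree NO_eq by fastforce

end

locale stuck = thm4 +
  fixes I :: "nat set" and rt :: nat
  assumes I_sub: "I \<subseteq> {..<r}" and rt_lt: "rt < r" and rt_notin: "rt \<notin> I"
    and noext: "\<not>(\<exists>m. goodM (insert rt I) m)"
begin

definition valid :: "(nat \<Rightarrow> 'a) \<Rightarrow> ('a \<times> nat) list \<Rightarrow> bool" where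
 "valid m ps \<longleftrightarrow> goodM I m \<and> (\<forall>i<length ps. snd (ps!i) \<in> I
    \<and> (\<forall>i'<i. snd (ps!i') \<noteq> snd (ps!i))
    \<and> (\<exists>p \<in> insert rt ((\<lambda>i'. snd (ps!i')) ` {..<i}). fst (ps!i) \<in> P p)
    \<and> Hout (fst (ps!i)) (m (snd (ps!i)))
    \<and> (\<forall>i'<i. \<not> Hout (fst (ps!i)) (fst (ps!i')) \<and> \<not> Hout (fst (ps!i)) (m (snd (ps!i')))))"

definition sig :: "(nat \<Rightarrow> 'a) \<Rightarrow> ('a \<times> nat) list \<Rightarrow> nat \<Rightarrow> nat" where
  "sig m ps i = card {b\<in>I. Hout (fst (ps!i)) (m b)}"

definition tau where
  "tau m ps = map (\<lambda>i. if i < length ps then sig m ps i else Suc r) [0..<r]"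

lemma finI: "finite I" using I_sub finite_subset by blast

lemma cardI: "card I < r"
proof -
  have "I \<subseteq> {..<r} - {rt}" using I_sub rt_notin by auto
  then have "card I \<le> card ({..<r} - {rt})" by (simp add: card_mono)
  then show ?thesis using rt_lt by simp
qed

lemma sig_le: "sig m ps i \<le> card I"
  unfolding sig_def by (rule card_mono[OF finI]) auto

lemma valid_len: "valid m ps \<Longrightarrow> length ps \<le> card I"
proof -
  assume v: "valid m ps"
  have "inj_on (\<lambda>i. snd (ps!i)) {..<length ps}"
    unfolding inj_on_def using v unfolding valid_def by (metis lessThan_iff linorder_neqE_nat)
  moreover have "(\<lambda>i. snd (ps!i)) ` {..<length ps} \<subseteq> I" using v unfolding valid_def by auto
  ultimately show ?thesis using card_inj_on_le[OF _ _ finI] by fastforce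
qed

lemma valid_take: "valid m ps \<Longrightarrow> valid m (take j ps)"
  unfolding valid_def by auto

lemma valid_upd: "valid m ps \<Longrightarrow> goodM I (m(b := w)) \<Longrightarrow> (\<forall>i<length ps. snd (ps!i) \<noteq> b)
   \<Longrightarrow> valid (m(b:=w)) ps"
  unfolding valid_def by auto

lemma valid_snoc:
  assumes v: "valid m ps" and b: "b \<in> I" and yq: "y \<in> P q"
    and q: "q \<in> insert rt ((\<lambda>i. snd (ps!i)) ` {..<length ps})"
    and h: "Hout y (m b)"
    and na: "\<forall>i<length ps. \<not> Hout y (fst (ps!i)) \<and> \<not> Hout y (m (snd (ps!i)))"
  shows "valid m (ps @ [(y,b)])"
proof -
  have dist: "\<forall>i<length ps. snd (ps!i) \<noteq> b" using na h by metis
  show ?thesis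
    unfolding valid_def
    apply (rule conjI)
    using v valid_def apply blast
    apply (intro allI impI)
    subgoal for i
    proof (cases "i < length ps")
      case True
      have im: "(\<lambda>i'. snd ((ps @ [(y, b)]) ! i')) ` {..<i} = (\<lambda>i'. snd (ps ! i')) ` {..<i}"
        using True by (auto simp: nth_append)
      show ?thesis using v True unfolding valid_def im by (auto simp: nth_append)
    next
      case False
      assume i: "i < length (ps @ [(y, b)])"
      then have ii: "i = length ps" using False by simp
      have im: "(\<lambda>i'. snd ((ps @ [(y, b)]) ! i')) ` {..<i} = (\<lambda>i'. snd (ps ! i')) ` {..<length ps}"
        using ii by (auto simp: nth_append)
      show ?thesis unfolding im using ii b dist yq q h na by (auto simp: nth_append)
    qed
    done
qed

lemma sig_take: "i < j \<Longrightarrow> sig m (take j ps) i = sig m ps i"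
  unfolding sig_def by simp

lemma sig_snoc: "i < length ps \<Longrightarrow> sig m (ps @ [x]) i = sig m ps i"
  unfolding sig_def by (simp add: nth_append)

lemma tau_nth: "i < r \<Longrightarrow> tau m ps ! i = (if i < length ps then sig m ps i else Suc r)"
  unfolding tau_def by simp

lemma tau_lex:
  assumes "p < length ps'" "p < length ps" "p < r"
    "\<forall>i<p. sig m' ps' i \<le> sig m ps i" "sig m' ps' p < sig m ps p"
  shows "(tau m' ps', tau m ps) \<in> lex less_than"
  apply (rule lex_of_first_lt[of _ _ p])
  using assms by (auto simp: tau_nth tau_def)


lemma valid_parts: "valid m ps \<Longrightarrow> i < length ps \<Longrightarrow> snd (ps!i) \<in> I \<and> snd (ps!i) < r"
  unfolding valid_def using I_sub by auto

lemma exists_free: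
  assumes v: "valid m ps"
  shows "\<exists>q z. q \<in> insert rt ((\<lambda>i. snd (ps!i)) ` {..<length ps}) \<and> z \<in> P q
     \<and> (\<forall>i<length ps. \<not> Hout (fst (ps!i)) z \<and> \<not> Hout (m (snd (ps!i))) z)"
proof -
  define A where "A = (\<lambda>i. snd (ps!i))"
  define Y where "Y = (\<lambda>i. fst (ps!i))"
  define t where "t = length ps"
  define Q where "Q = insert rt (A ` {..<t})"
  define T where "T = (\<Union>q\<in>Q. P q)"
  define B where "B = (\<Union>i<t. NO (Y i) \<union> NO (m (A i)))"
  have AI: "\<And>i. i < t \<Longrightarrow> A i \<in> I" using v unfolding valid_def A_def t_def by auto
  have Ar: "\<And>i. i < t \<Longrightarrow> A i < r" using AI I_sub by auto
  have injA: "inj_on A {..<t}"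
    unfolding inj_on_def using v unfolding valid_def A_def t_def by (metis lessThan_iff linorder_neqE_nat)
  have Qr: "Q \<subseteq> {..<r}" unfolding Q_def using Ar rt_lt by auto
  have finQ: "finite Q" unfolding Q_def by simp
  have rtA: "rt \<notin> A ` {..<t}" using AI rt_notin by auto
  have cardT: "card T = card (P rt) + (\<Sum>i<t. card (P (A i)))"
  proof -
    have "card T = (\<Sum>q\<in>Q. card (P q))"
      unfolding T_def
      apply (rule card_UN_disjoint[OF finQ])
      using Qr finP parts_disjoint by (auto, blast)
    also have "\<dots> = card (P rt) + (\<Sum>q\<in>A ` {..<t}. card (P q))"
      unfolding Q_def using rtA by (simp add: sum.insert)
    also have "(\<Sum>q\<in>A ` {..<t}. card (P q)) = (\<Sum>i<t. card (P (A i)))"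
      using sum.reindex[OF injA] by simp
    finally show ?thesis .
  qed
  have yP: "\<And>i. i < t \<Longrightarrow> \<exists>p<r. Y i \<in> P p"
  proof -
    fix i assume i: "i < t"
    then obtain p where "p \<in> insert rt (A ` {..<i})" "Y i \<in> P p"
      using v unfolding valid_def Y_def A_def t_def by blast
    moreover have "p < r" using calculation(1) Ar rt_lt i by auto
    ultimately show "\<exists>p<r. Y i \<in> P p" by blast
  qed
  have mA: "\<And>i. i < t \<Longrightarrow> m (A i) \<in> P (A i)" using v AI unfolding valid_def goodM_def by blast
  have cardB: "card B \<le> (\<Sum>i<t. card (P (A i)))"
  proof -
    have "card B \<le> (\<Sum>i<t. card (NO (Y i) \<union> NO (m (A i))))"
      unfolding B_def by (rule card_UN_le) simp
    also have "\<dots> \<le> (\<Sum>i<t. card (NO (Y i)) + card (NO (m (A i))))"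
      by (rule sum_mono) (rule card_Un_le)
    also have "\<dots> \<le> (\<Sum>i<t. card (P (A i)))"
    proof (rule sum_mono)
      fix i assume "i \<in> {..<t}"
      then have i: "i < t" by simp
      obtain p where "p < r" "Y i \<in> P p" using yP[OF i] by blast
      then have "card (NO (Y i)) \<le> k" using deg by blast
      moreover have "card (NO (m (A i))) + k \<le> card (P (A i))" using deg mA[OF i] Ar[OF i] by blast
      ultimately show "card (NO (Y i)) + card (NO (m (A i))) \<le> card (P (A i))" by simp
    qed
    finally show ?thesis .
  qed
  have "P rt \<noteq> {}" using parts_nonempty rt_lt by blast
  then have "card (P rt) > 0" using finP[OF rt_lt] by (simp add: card_gt_0_iff)
  then have lt: "card B < card T" using cardT cardB by simp
  have finB: "finite B" unfolding B_def using finNO by simp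
  have "\<not> T \<subseteq> B"
  proof
    assume "T \<subseteq> B"
    then have "card T \<le> card B" using card_mono[OF finB] by blast
    then show False using lt by simp
  qed
  then obtain z where zT: "z \<in> T" and zB: "z \<notin> B" by blast
  obtain q where q: "q \<in> Q" "z \<in> P q" using zT unfolding T_def by blast
  have "\<forall>i<t. \<not> Hout (Y i) z \<and> \<not> Hout (m (A i)) z"
    using zB unfolding B_def NO_def by auto
  then show ?thesis using q unfolding Q_def A_def Y_def t_def by blast
qed


lemma good_root:
  assumes g: "goodM I m" and z: "z \<in> P rt" and nz: "\<forall>b\<in>I. \<not> Hout z (m b)"
  shows "goodM (insert rt I) (m(rt := z))"
proof -
  have mP: "\<forall>i\<in>I. m i \<in> P i" and mE: "\<forall>i\<in>I. \<forall>j\<in>I. \<not> E (m i) (m j)"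
    using g unfolding goodM_def by auto
  have zE: "\<And>j. j \<in> I \<Longrightarrow> \<not> E z (m j)"
  proof
    fix j assume j: "j \<in> I" and e: "E z (m j)"
    have "Hout z (m j)" apply (rule Hout_diff[OF z mP[rule_format, OF j] rt_lt])
      using j I_sub rt_notin e by auto
    then show False using nz j by blast
  qed
  show ?thesis unfolding goodM_def using mP mE zE z rt_notin Eirr Esym by (auto, metis+)
qed

lemma good_upd:
  assumes g: "goodM I m" and a: "a \<in> I" and z: "z \<in> P a" and nz: "\<forall>b\<in>I. \<not> Hout z (m b)"
  shows "goodM I (m(a := z))"
proof -
  have mP: "\<forall>i\<in>I. m i \<in> P i" and mE: "\<forall>i\<in>I. \<forall>j\<in>I. \<not> E (m i) (m j)"
    using g unfolding goodM_def by auto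
  have zE: "\<And>j. j \<in> I \<Longrightarrow> j \<noteq> a \<Longrightarrow> \<not> E z (m j)"
  proof
    fix j assume j: "j \<in> I" "j \<noteq> a" and e: "E z (m j)"
    have "Hout z (m j)" apply (rule Hout_diff[OF z mP[rule_format, OF j(1)]])
      using j a I_sub e by auto
    then show False using nz j by blast
  qed
  show ?thesis unfolding goodM_def using mP mE zE z a Eirr Esym by (auto, metis+)
qed

lemma Bstep:
  "valid m ps \<Longrightarrow> z \<in> P q \<Longrightarrow> q \<in> insert rt ((\<lambda>i. snd (ps!i)) ` {..<length ps})
   \<Longrightarrow> \<forall>b\<in>I. \<not> Hout z (m b) \<Longrightarrow> \<forall>i<length ps. \<not> Hout z (fst (ps!i))
   \<Longrightarrow> \<exists>m' ps' p. valid m' ps' \<and> p < length ps \<and> p < length ps'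
        \<and> (\<forall>i<p. sig m' ps' i \<le> sig m ps i) \<and> sig m' ps' p < sig m ps p"
proof (induction "length ps" arbitrary: m ps z q rule: less_induct)
  case less
  note v = less.prems(1)
  have g: "goodM I m" using v valid_def by blast
  show ?case
  proof (cases "q = rt")
    case True
    then have "goodM (insert rt I) (m(rt := z))" using good_root[OF g] less.prems by blast
    then show ?thesis using noext by blast
  next
    case False
    then obtain j where j: "j < length ps" and qj: "q = snd (ps!j)" using less.prems(3) by auto
    define a where "a = snd (ps!j)"
    define yj where "yj = fst (ps!j)"
    define m' where "m' = m(a := z)"
    have aI: "a \<in> I" using valid_parts[OF v j] a_def by simp
    have g': "goodM I m'" unfolding m'_def
      using good_upd[OF g aI] less.prems(2,4) qj a_def by blast
    have vt: "valid m' (take j ps)" unfolding m'_def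
      apply (rule valid_upd[OF valid_take[OF v] g'[unfolded m'_def]])
      using v j unfolding valid_def a_def by auto
    have lt: "length (take j ps) = j" using j by simp
    have sig_le: "\<forall>i<j. sig m' (take j ps) i \<le> sig m ps i"
    proof (intro allI impI)
      fix i assume i: "i < j"
      have "{b\<in>I. Hout (fst (ps!i)) (m' b)} \<subseteq> {b\<in>I. Hout (fst (ps!i)) (m b)}"
        using less.prems(5) i j Hout_sym unfolding m'_def by auto
      then show "sig m' (take j ps) i \<le> sig m ps i"
        unfolding sig_def using i by (simp add: card_mono[OF finite_subset[OF _ finI]])
    qed
    have Sj: "{b\<in>I. Hout yj (m' b)} = {b\<in>I. Hout yj (m b)} - {a}"
      using less.prems(5) j Hout_sym unfolding m'_def yj_def by auto
    have ha: "Hout yj (m a)" using v j unfolding valid_def yj_def a_def by blast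
    have sigj: "card {b\<in>I. Hout yj (m' b)} < sig m ps j"
      unfolding sig_def Sj yj_def[symmetric]
      apply (rule psubset_card_mono)
      using finI ha aI by auto
    obtain q' where q': "q' \<in> insert rt ((\<lambda>i. snd (ps!i)) ` {..<j})" "yj \<in> P q'"
      using v j unfolding valid_def yj_def by blast
    have q'': "q' \<in> insert rt ((\<lambda>i. snd (take j ps!i)) ` {..<length (take j ps)})"
      using q'(1) lt by auto
    have nay: "\<forall>i<length (take j ps). \<not> Hout yj (fst (take j ps!i)) \<and> \<not> Hout yj (m' (snd (take j ps!i)))"
    proof (intro allI impI)
      fix i assume "i < length (take j ps)"
      then have i: "i < j" using lt by simp
      have "snd (ps!i) \<noteq> a" using v j i unfolding valid_def a_def by auto
      then show "\<not> Hout yj (fst (take j ps!i)) \<and> \<not> Hout yj (m' (snd (take j ps!i)))"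
        using v j i unfolding valid_def yj_def m'_def by auto
    qed
    show ?thesis
    proof (cases "\<exists>b\<in>I. Hout yj (m' b)")
      case True
      then obtain b where b: "b \<in> I" "Hout yj (m' b)" by blast
      define ps' where "ps' = take j ps @ [(yj, b)]"
      have v': "valid m' ps'" unfolding ps'_def
        by (rule valid_snoc[OF vt b(1) q'(2) q'' b(2) nay])
      have "\<forall>i<j. sig m' ps' i \<le> sig m ps i"
        using sig_le sig_snoc lt unfolding ps'_def by simp
      moreover have "sig m' ps' j < sig m ps j"
        using sigj unfolding ps'_def sig_def using lt by (simp add: nth_append)
      moreover have "j < length ps'" unfolding ps'_def using lt by simp
      ultimately show ?thesis using v' j by blast
    next
      case False
      have "\<exists>m'' ps'' p. valid m'' ps'' \<and> p < length (take j ps) \<and> p < length ps''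
        \<and> (\<forall>i<p. sig m'' ps'' i \<le> sig m' (take j ps) i) \<and> sig m'' ps'' p < sig m' (take j ps) p"
        apply (rule less.hyps[OF _ vt q'(2) q''])
        using lt j False apply auto[2]
        using nay by blast
      then obtain m'' ps'' p where r: "valid m'' ps''" "p < j" "p < length ps''"
          "\<forall>i<p. sig m'' ps'' i \<le> sig m' (take j ps) i" "sig m'' ps'' p < sig m' (take j ps) p"
        using lt by auto
      have "\<forall>i<p. sig m'' ps'' i \<le> sig m ps i" using r(2,4) sig_le by (meson dual_order.trans order.strict_trans)
      moreover have "sig m'' ps'' p < sig m ps p" using r(2,5) sig_le by (meson order.strict_trans2)
      ultimately show ?thesis using r j by (meson order.strict_trans)
    qed
  qed
qed


lemma no_valid_aux: "\<forall>m ps. tau m ps = xs \<longrightarrow> \<not> valid m ps"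
proof (rule wf_induct[OF wf_lex[OF wf_less_than]])
  fix xs assume IH: "\<forall>y. (y, xs) \<in> lex less_than \<longrightarrow> (\<forall>m ps. tau m ps = y \<longrightarrow> \<not> valid m ps)"
  show "\<forall>m ps. tau m ps = xs \<longrightarrow> \<not> valid m ps"
  proof (intro allI impI notI)
    fix m ps assume tx: "tau m ps = xs" and v: "valid m ps"
    obtain q z where q: "q \<in> insert rt ((\<lambda>i. snd (ps!i)) ` {..<length ps})" "z \<in> P q"
      and nz: "\<forall>i<length ps. \<not> Hout (fst (ps!i)) z \<and> \<not> Hout (m (snd (ps!i))) z"
      using exists_free[OF v] by blast
    show False
    proof (cases "\<exists>b\<in>I. Hout z (m b)")
      case True
      then obtain b where b: "b \<in> I" "Hout z (m b)" by blast
      define ps' where "ps' = ps @ [(z, b)]"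
      have v': "valid m ps'" unfolding ps'_def
        apply (rule valid_snoc[OF v b(1) q(2) q(1) b(2)])
        using nz Hout_sym by blast
      have "length ps' \<le> card I" using valid_len[OF v'] .
      then have lr: "length ps < r" using cardI unfolding ps'_def by simp
      have "(tau m ps', tau m ps) \<in> lex less_than"
        apply (rule lex_of_first_lt[of _ _ "length ps"])
          apply (simp add: tau_def)
        using lr apply (simp add: tau_def)
        using lr apply (simp add: tau_nth ps'_def sig_snoc)
        using lr sig_le[of m ps' "length ps"] cardI by (simp add: tau_nth ps'_def)
      then show False using IH tx v' by blast
    next
      case False
      obtain m' ps' p where r: "valid m' ps'" "p < length ps" "p < length ps'"
          "\<forall>i<p. sig m' ps' i \<le> sig m ps i" "sig m' ps' p < sig m ps p"
        using Bstep[OF v q(2) q(1)] False nz Hout_sym by blast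
      have "p < r" using r(2) valid_len[OF v] cardI by simp
      then have "(tau m' ps', tau m ps) \<in> lex less_than"
        using tau_lex r by blast
      then show False using IH tx r(1) by blast
    qed
  qed
qed

lemma contradiction: "goodM I m \<Longrightarrow> False"
proof -
  assume "goodM I m"
  then have "valid m []" by (simp add: valid_def)
  then show False using no_valid_aux[of "tau m []"] by blast
qed

end

lemma (in thm4) extend: "finite I \<Longrightarrow> I \<subseteq> {..<r} \<Longrightarrow> \<exists>m. goodM I m"
proof (induction I rule: finite_induct)
  case empty then show ?case by (simp add: goodM_def)
next
  case (insert x F)
  then obtain m where m: "goodM F m" by auto
  show ?case
  proof (rule ccontr)
    assume "\<not> (\<exists>m. goodM (insert x F) m)"
    then interpret stuck V E P k r F x
      apply unfold_locales using insert by auto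
    show False using contradiction[OF m] .
  qed
qed

theorem theorem4:
  fixes V :: "'a set" and E :: "'a \<Rightarrow> 'a \<Rightarrow> bool"
    and P :: "nat \<Rightarrow> 'a set" and k r :: nat
  assumes graph: "simple_graph V E"
    and kpos: "k > 0"
    and parts_nonempty: "\<forall>i<r. P i \<noteq> {}"
    and parts_disjoint: "\<forall>i<r. \<forall>j<r. i \<noteq> j \<longrightarrow> P i \<inter> P j = {}"
    and parts_cover: "(\<Union>i<r. P i) = V"
    and parts_cliques: "\<forall>i<r. is_clique E (P i)"
    and degree: "\<forall>i<r. \<forall>v\<in>P i.
        int (card (nbrs_outside V E v (P i))) \<le> min (int k) (int (card (P i)) - int k)"
  shows "\<exists>S. S \<subseteq> V \<and> stable_set E S \<and> card S = r"
proof -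
  interpret thm4 V E P k r using assms by unfold_locales
  obtain m where m: "goodM {..<r} m" using extend by blast
  have mP: "\<forall>i<r. m i \<in> P i" and mE: "\<forall>i<r. \<forall>j<r. \<not> E (m i) (m j)"
    using m unfolding goodM_def by auto
  have inj: "inj_on m {..<r}"
    unfolding inj_on_def by (metis lessThan_iff mP disj)
  show ?thesis
  proof (intro exI conjI)
    show "m ` {..<r} \<subseteq> V" using mP PV by auto
    show "stable_set E (m ` {..<r})" unfolding stable_set_def using mE by auto
    show "card (m ` {..<r}) = r" using card_image[OF inj] by simp
  qed
qed

end
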